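(* For every $n\geq 3$, the cycle $C_n$ is a strong 2-cop-win graph and $\lim_{m\to\infty}\mathrm{capt}_2(C_n,m)=\lfloor (n-1)/2\rfloor$.
   Context: All graphs are finite, simple, connected and reflexive (a player may stay in place). The game of $k$ cops and $m$ robbers on $G$: in round 0 the cops first choose starting vertices, then the robbers choose theirs. In each round $i\geq 1$, all $k$ cops move (each to an adjacent vertex or staying), then all $m$ robbers move likewise. Several players may occupy the same vertex. Whenever a cop and some robbers occupy the same vertex, those robbers are captured and take no further part in the game. Both sides have full information. The cops win if all robbers are captured after finitely many rounds. $G$ is $k$-cop-win if $k$ cops can always win against one robber. For a $k$-cop-win graph $G$, $\mathrm{capt}_k(G,m)$ is the index of the round in which the last robber is captured when $k$ cops play to minimize this index and $m$ robbers play to maximize it. $G$ is strong $k$-cop-win if $\lim_{m\to\infty}\mathrm{capt}_k(G,m)$ exists (and is finite). *)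

theory Defs
  imports Complex_Main
begin

text \<open>A graph is given by a vertex set V and an (irreflexive, symmetric) edge
relation E; the game is played reflexively: a player may stay or move along an edge.
k cops occupy positions c i (i < k); m robbers have status r j (j < m), where
None means captured and Some v means active at vertex v.\<close>

definition step_ok :: "'v set \<Rightarrow> ('v \<Rightarrow> 'v \<Rightarrow> bool) \<Rightarrow> 'v \<Rightarrow> 'v \<Rightarrow> bool" where
  "step_ok V E v w \<longleftrightarrow> w \<in> V \<and> (w = v \<or> E v w)"

definition cop_move :: "'v set \<Rightarrow> ('v \<Rightarrow> 'v \<Rightarrow> bool) \<Rightarrow> nat \<Rightarrow> (nat \<Rightarrow> 'v) \<Rightarrow> (nat \<Rightarrow> 'v) \<Rightarrow> bool" where
  "cop_move V E k c c' \<longleftrightarrow> (\<forall>i<k. step_ok V E (c i) (c' i))"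

definition robber_move :: "'v set \<Rightarrow> ('v \<Rightarrow> 'v \<Rightarrow> bool) \<Rightarrow> nat \<Rightarrow> (nat \<Rightarrow> 'v option) \<Rightarrow> (nat \<Rightarrow> 'v option) \<Rightarrow> bool" where
  "robber_move V E m r r' \<longleftrightarrow> (\<forall>j<m. case r j of
       None \<Rightarrow> r' j = None
     | Some v \<Rightarrow> (\<exists>w. r' j = Some w \<and> step_ok V E v w))"

definition capture :: "nat \<Rightarrow> (nat \<Rightarrow> 'v) \<Rightarrow> (nat \<Rightarrow> 'v option) \<Rightarrow> (nat \<Rightarrow> 'v option)" where
  "capture k c r = (\<lambda>j. case r j of None \<Rightarrow> None
                      | Some v \<Rightarrow> (if \<exists>i<k. c i = v then None else Some v))"

definition all_captured :: "nat \<Rightarrow> (nat \<Rightarrow> 'v option) \<Rightarrow> bool" where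
  "all_captured m r \<longleftrightarrow> (\<forall>j<m. r j = None)"

text \<open>win_in V E k m t c r: from the state (c, r) at the end of a round (captures
already applied), the cops can guarantee that all robbers are captured within t
further rounds.\<close>
fun win_in :: "'v set \<Rightarrow> ('v \<Rightarrow> 'v \<Rightarrow> bool) \<Rightarrow> nat \<Rightarrow> nat \<Rightarrow> nat \<Rightarrow> (nat \<Rightarrow> 'v) \<Rightarrow> (nat \<Rightarrow> 'v option) \<Rightarrow> bool" where
  "win_in V E k m 0 c r = all_captured m r"
| "win_in V E k m (Suc t) c r =
     (all_captured m r \<or>
      (\<exists>c'. cop_move V E k c c' \<and>
        (\<forall>r'. robber_move V E m (capture k c' r) r' \<longrightarrow>
              win_in V E k m t c' (capture k c' r'))))"

definition capt_within :: "'v set \<Rightarrow> ('v \<Rightarrow> 'v \<Rightarrow> bool) \<Rightarrow> nat \<Rightarrow> nat \<Rightarrow> nat \<Rightarrow> bool" where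
  "capt_within V E k m t \<longleftrightarrow>
     (\<exists>c0. (\<forall>i<k. c0 i \<in> V) \<and>
        (\<forall>r0. (\<forall>j<m. r0 j \<in> V) \<longrightarrow> win_in V E k m t c0 (capture k c0 (\<lambda>j. Some (r0 j)))))"

definition cop_win :: "'v set \<Rightarrow> ('v \<Rightarrow> 'v \<Rightarrow> bool) \<Rightarrow> nat \<Rightarrow> bool" where
  "cop_win V E k \<longleftrightarrow> (\<exists>t. capt_within V E k 1 t)"

definition capt :: "'v set \<Rightarrow> ('v \<Rightarrow> 'v \<Rightarrow> bool) \<Rightarrow> nat \<Rightarrow> nat \<Rightarrow> nat" where
  "capt V E k m = (LEAST t. capt_within V E k m t)"

definition strong_cop_win :: "'v set \<Rightarrow> ('v \<Rightarrow> 'v \<Rightarrow> bool) \<Rightarrow> nat \<Rightarrow> bool" where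
  "strong_cop_win V E k \<longleftrightarrow> cop_win V E k \<and> convergent (\<lambda>m. real (capt V E k m))"

definition cycle_V :: "nat \<Rightarrow> nat set" where
  "cycle_V n = {0..<n}"

definition cycle_E :: "nat \<Rightarrow> nat \<Rightarrow> nat \<Rightarrow> bool" where
  "cycle_E n i j \<longleftrightarrow> i < n \<and> j < n \<and> (j = (i + 1) mod n \<or> i = (j + 1) mod n)"

end

theory Submission
  imports Defs
begin

lemma ex_less_2: "(\<exists>i<(2::nat). P i) \<longleftrightarrow> P 0 \<or> P (Suc 0)"
  by (auto simp: numeral_2_eq_2 less_Suc_eq)

lemma capture2: "capture 2 c r = (\<lambda>j. case r j of None \<Rightarrow> None
      | Some v \<Rightarrow> (if c 0 = v \<or> c (Suc 0) = v then None else Some v))"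
  unfolding capture_def ex_less_2 by simp

lemma capture_Some2:
  "capture 2 c r j = Some v \<longleftrightarrow> r j = Some v \<and> v \<noteq> c 0 \<and> v \<noteq> c (Suc 0)"
  unfolding capture2 by (auto split: option.splits)

lemma capture_idem: "capture 2 c (capture 2 c r) = capture 2 c r"
  unfolding capture2 by (auto split: option.splits)

definition alive :: "nat \<Rightarrow> (nat \<Rightarrow> 'v option) \<Rightarrow> 'v set" where
  "alive m r = {v. \<exists>j<m. r j = Some v}"

lemma alive_finite: "finite (alive m r)"
proof -
  have "alive m r \<subseteq> (\<lambda>j. the (r j)) ` {..<m}" by (force simp: alive_def)
  then show ?thesis by (rule finite_subset) simp
qed

lemma lower:
  "win_in V E 2 m t c r \<Longrightarrow> alive m r \<subseteq> V \<Longrightarrow> card (alive m r) \<le> 2*t"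
proof (induction t arbitrary: c r)
  case 0
  then have "alive m r = {}" by (auto simp: alive_def all_captured_def)
  then show ?case by simp
next
  case (Suc t)
  show ?case
  proof (cases "all_captured m r")
    case True
    then have "alive m r = {}" by (auto simp: alive_def all_captured_def)
    then show ?thesis by simp
  next
    case False
    with Suc.prems(1) obtain c' where
      W: "\<forall>r'. robber_move V E m (capture 2 c' r) r' \<longrightarrow> win_in V E 2 m t c' (capture 2 c' r')"
      by auto
    have rm: "robber_move V E m (capture 2 c' r) (capture 2 c' r)"
      unfolding robber_move_def
    proof (intro allI impI)
      fix j assume j: "j < m"
      show "case capture 2 c' r j of None \<Rightarrow> capture 2 c' r j = None
            | Some v \<Rightarrow> \<exists>w. capture 2 c' r j = Some w \<and> step_ok V E v w"
      proof (cases "capture 2 c' r j")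
        case None then show ?thesis by simp
      next
        case (Some v)
        then have "r j = Some v" by (simp add: capture_Some2)
        then have "v \<in> V" using Suc.prems(2) j by (auto simp: alive_def)
        then show ?thesis using Some by (simp add: step_ok_def)
      qed
    qed
    have w: "win_in V E 2 m t c' (capture 2 c' r)"
      using W rm capture_idem by metis
    have sub: "alive m (capture 2 c' r) \<subseteq> V"
      using Suc.prems(2) by (auto simp: alive_def capture_Some2)
    have ih: "card (alive m (capture 2 c' r)) \<le> 2*t" using Suc.IH[OF w sub] .
    have "alive m r \<subseteq> alive m (capture 2 c' r) \<union> {c' 0, c' (Suc 0)}"
      by (auto simp: alive_def capture_Some2)
    then have "card (alive m r) \<le> card (alive m (capture 2 c' r) \<union> {c' 0, c' (Suc 0)})"
      by (intro card_mono) (auto simp: alive_finite)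
    also have "\<dots> \<le> card (alive m (capture 2 c' r)) + card {c' 0, c' (Suc 0)}"
      by (rule card_Un_le)
    also have "card {c' 0, c' (Suc 0)} \<le> 2" by (simp add: card_insert_le_m1)
    finally show ?thesis using ih by simp
  qed
qed

lemma edge_mid:
  assumes "cycle_E n v w" "0 < v" "v + 1 < n"
  shows "w = v + 1 \<or> w + 1 = v"
proof -
  have "w < n" using assms by (simp add: cycle_E_def)
  from assms(1) have "w = (v+1) mod n \<or> v = (w+1) mod n" by (simp add: cycle_E_def)
  then show ?thesis
  proof
    assume "w = (v+1) mod n" then show ?thesis using assms by simp
  next
    assume h: "v = (w+1) mod n"
    show ?thesis
    proof (cases "w + 1 < n")
      case True then show ?thesis using h by simp
    next
      case False then have "w + 1 = n" using \<open>w < n\<close> by simp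
      then show ?thesis using h assms by simp
    qed
  qed
qed

lemma upper:
  assumes n: "n \<ge> 3"
  shows "1 \<le> a \<Longrightarrow> b \<le> n - 1 \<Longrightarrow> b < a + 2*j \<Longrightarrow> c 0 = a - 1 \<Longrightarrow> c (Suc 0) = (b+1) mod n
    \<Longrightarrow> (\<forall>i v. i < m \<longrightarrow> r i = Some v \<longrightarrow> a \<le> v \<and> v \<le> b)
    \<Longrightarrow> win_in (cycle_V n) (cycle_E n) 2 m j c r"
proof (induction j arbitrary: a b c r)
  case 0
  have "all_captured m r" unfolding all_captured_def
  proof (intro allI impI)
    fix i assume i: "i < m"
    show "r i = None"
    proof (cases "r i")
      case (Some v)
      then have "a \<le> v \<and> v \<le> b" using 0 i by blast
      then show ?thesis using 0 by simp
    qed simp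
  qed
  then show ?case by simp
next
  case (Suc j)
  show ?case
  proof (cases "b < a")
    case True
    have "all_captured m r" unfolding all_captured_def
    proof (intro allI impI)
      fix i assume i: "i < m"
      show "r i = None"
      proof (cases "r i")
        case (Some v)
        then have "a \<le> v \<and> v \<le> b" using Suc.prems(6) i by blast
        then show ?thesis using True by simp
      qed simp
    qed
    then show ?thesis by simp
  next
    case False
    define c' :: "nat \<Rightarrow> nat" where "c' = (\<lambda>i. if i = 0 then a else b)"
    have an: "a < n" "b < n" using False Suc.prems n by auto
    have cm: "cop_move (cycle_V n) (cycle_E n) 2 c c'"
      unfolding cop_move_def
    proof (intro allI impI)
      fix i :: nat assume "i < 2"
      then have "i = 0 \<or> i = Suc 0" by auto
      then show "step_ok (cycle_V n) (cycle_E n) (c i) (c' i)"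
      proof
        assume "i = 0"
        then show ?thesis using an Suc.prems(1,4)
          by (auto simp: step_ok_def cycle_V_def cycle_E_def c'_def)
      next
        assume "i = Suc 0"
        then show ?thesis using an Suc.prems(5)
          by (auto simp: step_ok_def cycle_V_def cycle_E_def c'_def)
      qed
    qed
    have c'0: "c' 0 = a" and c'1: "c' (Suc 0) = b" by (auto simp: c'_def)
    have rest: "win_in (cycle_V n) (cycle_E n) 2 m j c' (capture 2 c' r')"
      if rm: "robber_move (cycle_V n) (cycle_E n) m (capture 2 c' r) r'" for r'
    proof (rule Suc.IH[of "a+1" "b-1"])
      show "1 \<le> a + 1" by simp
      show "b - 1 \<le> n - 1" using an by simp
      show "b - 1 < a + 1 + 2 * j" using Suc.prems(3) by simp
      show "c' 0 = a + 1 - 1" by (simp add: c'_def)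
      show "c' (Suc 0) = (b - 1 + 1) mod n" using an False Suc.prems(1) by (simp add: c'_def)
      show "\<forall>i v. i < m \<longrightarrow> capture 2 c' r' i = Some v \<longrightarrow> a + 1 \<le> v \<and> v \<le> b - 1"
      proof (intro allI impI)
        fix i w assume i: "i < m" and cw: "capture 2 c' r' i = Some w"
        then have r'w: "r' i = Some w" and wa: "w \<noteq> a" and wb: "w \<noteq> b"
          by (auto simp: capture_Some2 c'0 c'1)
        have rmi: "case capture 2 c' r i of None \<Rightarrow> r' i = None
             | Some v \<Rightarrow> (\<exists>w. r' i = Some w \<and> step_ok (cycle_V n) (cycle_E n) v w)"
          using rm i unfolding robber_move_def by blast
        have "a \<le> w \<and> w \<le> b"
        proof (cases "capture 2 c' r i")
          case None
          then show ?thesis using rmi r'w by simp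
        next
          case (Some v)
          then have rv: "r i = Some v" and va: "v \<noteq> a" and vb: "v \<noteq> b"
            by (auto simp: capture_Some2 c'0 c'1)
          have "a \<le> v \<and> v \<le> b" using Suc.prems(6) i rv by blast
          then have av: "a < v" "v < b" using va vb by auto
          have so: "step_ok (cycle_V n) (cycle_E n) v w"
            using rmi Some r'w by auto
          then have "w = v \<or> cycle_E n v w" by (simp add: step_ok_def)
          then have "w = v \<or> w = v + 1 \<or> w + 1 = v"
            using edge_mid[of n v w] av an Suc.prems(1) by force
          then show ?thesis using av by auto
        qed
        then show "a + 1 \<le> w \<and> w \<le> b - 1" using wa wb by auto
      qed
    qed
    show ?thesis
      apply (subst win_in.simps(2))
      apply (rule disjI2)
      apply (rule exI[of _ c'])
      apply (intro conjI allI impI cm)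
      apply (erule rest)
      done
  qed
qed

lemma upper_capt:
  assumes n: "n \<ge> 3"
  shows "capt_within (cycle_V n) (cycle_E n) 2 m ((n - 1) div 2)"
  unfolding capt_within_def
proof (intro exI[of _ "\<lambda>i::nat. if i = 0 then 1 else 0"] conjI allI impI)
  fix i :: nat assume "i < 2"
  show "(if i = 0 then 1 else 0) \<in> cycle_V n" using n by (simp add: cycle_V_def)
next
  fix r0 :: "nat \<Rightarrow> nat" assume r0: "\<forall>j<m. r0 j \<in> cycle_V n"
  show "win_in (cycle_V n) (cycle_E n) 2 m ((n - 1) div 2) (\<lambda>i::nat. if i = 0 then 1 else 0)
          (capture 2 (\<lambda>i::nat. if i = 0 then 1 else 0) (\<lambda>j. Some (r0 j)))"
  proof (rule upper[OF n, of 2 "n - 1"])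
    show "\<forall>i v. i < m \<longrightarrow> capture 2 (\<lambda>i::nat. if i = 0 then 1 else 0) (\<lambda>j. Some (r0 j)) i = Some v
       \<longrightarrow> 2 \<le> v \<and> v \<le> n - 1"
      using r0 by (auto simp: capture_Some2 cycle_V_def)
  qed (use n in auto)
qed

lemma lower_capt:
  assumes n: "n \<ge> 3" and m: "m \<ge> n"
    and cw: "capt_within (cycle_V n) (cycle_E n) 2 m t"
  shows "(n - 1) div 2 \<le> t"
proof -
  from cw obtain c0 where
    c0: "\<forall>r0. (\<forall>j<m. r0 j \<in> cycle_V n) \<longrightarrow>
          win_in (cycle_V n) (cycle_E n) 2 m t c0 (capture 2 c0 (\<lambda>j. Some (r0 j)))"
    unfolding capt_within_def by blast
  define r where "r = capture 2 c0 (\<lambda>j. Some (j mod n))"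
  have w: "win_in (cycle_V n) (cycle_E n) 2 m t c0 r"
    using c0 n unfolding r_def by (auto simp: cycle_V_def)
  have sub: "alive m r \<subseteq> cycle_V n"
    using n by (auto simp: alive_def r_def capture_Some2 cycle_V_def)
  have "card (alive m r) \<le> 2 * t" using lower[OF w sub] .
  moreover have "{0..<n} - {c0 0, c0 (Suc 0)} \<subseteq> alive m r"
  proof
    fix v assume "v \<in> {0..<n} - {c0 0, c0 (Suc 0)}"
    then have "v < n" "v \<noteq> c0 0" "v \<noteq> c0 (Suc 0)" by auto
    then have "r v = Some v" "v < m" using m by (auto simp: r_def capture_Some2)
    then show "v \<in> alive m r" by (auto simp: alive_def)
  qed
  then have "card ({0..<n} - {c0 0, c0 (Suc 0)}) \<le> card (alive m r)"
    by (intro card_mono alive_finite)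
  moreover have "card ({0..<n} - {c0 0, c0 (Suc 0)}) \<ge> n - 2"
  proof -
    have "card ({0..<n::nat}) - card {c0 0, c0 (Suc 0)} \<le> card ({0..<n} - {c0 0, c0 (Suc 0)})"
      by (rule diff_card_le_card_Diff) simp
    moreover have "card {c0 0, c0 (Suc 0)} \<le> 2" by (simp add: card_insert_le_m1)
    ultimately show ?thesis by simp
  qed
  ultimately show ?thesis by linarith
qed

lemma capt_eq:
  assumes n: "n \<ge> 3" and m: "m \<ge> n"
  shows "capt (cycle_V n) (cycle_E n) 2 m = (n - 1) div 2"
  unfolding capt_def
proof (rule Least_equality)
  show "capt_within (cycle_V n) (cycle_E n) 2 m ((n - 1) div 2)" by (rule upper_capt[OF n])
next
  fix t assume "capt_within (cycle_V n) (cycle_E n) 2 m t"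
  then show "(n - 1) div 2 \<le> t" by (rule lower_capt[OF n m])
qed

theorem mainTheorem11:
  fixes n :: nat
  assumes "n \<ge> 3"
  shows "strong_cop_win (cycle_V n) (cycle_E n) 2 \<and>
         (\<lambda>m. real (capt (cycle_V n) (cycle_E n) 2 m)) \<longlonglongrightarrow> real ((n - 1) div 2)"
proof -
  have lim: "(\<lambda>m. real (capt (cycle_V n) (cycle_E n) 2 m)) \<longlonglongrightarrow> real ((n - 1) div 2)"
  proof (rule LIMSEQ_offset[where k = n])
    have "(\<lambda>m. real (capt (cycle_V n) (cycle_E n) 2 (m + n))) = (\<lambda>m. real ((n - 1) div 2))"
      using capt_eq[OF assms] by simp
    then show "(\<lambda>m. real (capt (cycle_V n) (cycle_E n) 2 (m + n))) \<longlonglongrightarrow> real ((n - 1) div 2)"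
      by simp
  qed
  have "cop_win (cycle_V n) (cycle_E n) 2"
    unfolding cop_win_def using upper_capt[OF assms] by blast
  then show ?thesis using lim by (auto simp: strong_cop_win_def convergent_def)
qed

end
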